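(* For an integer $n\ge 2$, $\Phi(n)=\Lambda(n)$ if and only if $n=2$ or $n=p^r$ for some odd prime $p$ and some integer $r>0$.
   Context: For a positive integer $n$, let $\mathcal{G}_n=\{a+bi\in\mathbb{Z}[i]/n\mathbb{Z}[i] : a^2+b^2\equiv 1 \pmod n\}$ (a multiplicative group). Define $\Phi(n)=|\mathcal{G}_n|$ and $\Lambda(n)$ to be the exponent of the group $\mathcal{G}_n$. *)

theory Defs
  imports "HOL-Algebra.Group" "HOL-Number_Theory.Number_Theory"
begin

text \<open>Elements a + b i of Z[i]/nZ[i] are represented by pairs (a,b) of canonical
  residues 0 \<le> a, b < n.\<close>

definition gauss_mult :: "nat \<Rightarrow> int \<times> int \<Rightarrow> int \<times> int \<Rightarrow> int \<times> int" where
  "gauss_mult n x y = ((fst x * fst y - snd x * snd y) mod int n,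
                       (fst x * snd y + snd x * fst y) mod int n)"

definition G :: "nat \<Rightarrow> (int \<times> int) monoid" where
  "G n = \<lparr> carrier = {(a, b). 0 \<le> a \<and> a < int n \<and> 0 \<le> b \<and> b < int n \<and>
                               [a^2 + b^2 = 1] (mod int n)},
           mult = gauss_mult n,
           one = (1 mod int n, 0) \<rparr>"

definition Phi :: "nat \<Rightarrow> nat" where
  "Phi n = card (carrier (G n))"

definition Lambda :: "nat \<Rightarrow> nat" where
  "Lambda n = (LEAST k. 0 < k \<and> (\<forall>x \<in> carrier (G n). x [^]\<^bsub>G n\<^esub> k = \<one>\<^bsub>G n\<^esub>))"

end

theory Submission
  imports Defs "HOL-Algebra.Multiplicative_Group"
begin

datatype gi = GI (re: int) (im: int)

instantiation gi :: comm_ring_1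
begin
definition "0 = GI 0 0"
definition "1 = GI 1 0"
definition "x + y = GI (re x + re y) (im x + im y)"
definition "x - y = GI (re x - re y) (im x - im y)"
definition "- x = GI (- re x) (- im x)"
definition "x * y = GI (re x * re y - im x * im y) (re x * im y + im x * re y)"
instance
  by standard (auto simp: zero_gi_def one_gi_def plus_gi_def minus_gi_def uminus_gi_def
      times_gi_def algebra_simps intro: gi.expand)
end
lemma gi_simps[simp]:
  "re 0 = 0" "im 0 = 0" "re 1 = 1" "im 1 = 0"
  "re (x + y) = re x + re y" "im (x + y) = im x + im y"
  "re (x - y) = re x - re y" "im (x - y) = im x - im y"
  "re (- x) = - re x" "im (- x) = - im x"
  "re (x * y) = re x * re y - im x * im y" "im (x * y) = re x * im y + im x * re y"
  by (simp_all add: zero_gi_def one_gi_def plus_gi_def minus_gi_def uminus_gi_def times_gi_def)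

lemma gi_eq_iff: "x = y \<longleftrightarrow> re x = re y \<and> im x = im y"
  by (cases x; cases y) auto

lemma of_nat_gi[simp]: "re (of_nat k) = int k" "im (of_nat k) = 0"
  by (induction k) auto

lemma of_int_gi[simp]: "re (of_int k) = k" "im (of_int k) = 0"
  by (cases k rule: int_cases; simp)+

lemma of_int_gi_mult: "re (of_int k * z) = k * re z" "im (of_int k * z) = k * im z"
  by simp_all

lemma of_int_dvd_gi: "(of_int k :: gi) dvd z \<longleftrightarrow> k dvd re z \<and> k dvd im z"
proof
  assume "(of_int k :: gi) dvd z"
  then obtain w where "z = of_int k * w" by (auto elim: dvdE)
  then show "k dvd re z \<and> k dvd im z" by simp
next
  assume "k dvd re z \<and> k dvd im z"
  then obtain a b where "re z = k * a" "im z = k * b" by (auto elim!: dvdE)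
  then have "z = of_int k * GI a b" by (simp add: gi_eq_iff)
  then show "(of_int k :: gi) dvd z" by simp
qed

definition cnj :: "gi \<Rightarrow> gi" where "cnj z = GI (re z) (- im z)"
definition nrm :: "gi \<Rightarrow> int" where "nrm z = re z ^ 2 + im z ^ 2"

lemma cnj_simps[simp]: "re (cnj z) = re z" "im (cnj z) = - im z"
  by (simp_all add: cnj_def)

lemma cnj_mult: "cnj (z * w) = cnj z * cnj w" by (simp add: gi_eq_iff)
lemma cnj_diff: "cnj (z - w) = cnj z - cnj w" by (simp add: gi_eq_iff)
lemma cnj_one[simp]: "cnj 1 = 1" by (simp add: gi_eq_iff)
lemma cnj_pow: "cnj (z ^ k) = cnj z ^ k" by (induction k) (auto simp: cnj_mult)
lemma mult_cnj: "z * cnj z = of_int (nrm z)" by (simp add: gi_eq_iff nrm_def power2_eq_square)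
lemma nrm_mult: "nrm (z * w) = nrm z * nrm w" by (simp add: nrm_def power2_eq_square algebra_simps)
lemma nrm_pow: "nrm (z ^ k) = nrm z ^ k"
  by (induction k) (simp_all add: nrm_mult, simp add: nrm_def)

definition gc :: "int \<Rightarrow> gi \<Rightarrow> gi \<Rightarrow> bool" where "gc n z w \<longleftrightarrow> (of_int n :: gi) dvd (z - w)"

lemma gc_refl[simp]: "gc n z z" by (simp add: gc_def)
lemma gc_sym: "gc n z w \<Longrightarrow> gc n w z"
  by (simp add: gc_def) (metis dvd_minus_iff minus_diff_eq)
lemma gc_trans: "gc n z w \<Longrightarrow> gc n w u \<Longrightarrow> gc n z u"
  unfolding gc_def by (metis diff_add_cancel add_diff_eq dvd_add diff_diff_eq2)
lemma gc_mult: "gc n z w \<Longrightarrow> gc n z' w' \<Longrightarrow> gc n (z * z') (w * w')"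
proof -
  assume "gc n z w" "gc n z' w'"
  then have "(of_int n :: gi) dvd (z - w) * z' + w * (z' - w')"
    unfolding gc_def by (intro dvd_add dvd_mult2 dvd_mult) auto
  then show ?thesis unfolding gc_def by (simp add: algebra_simps)
qed
lemma gc_pow: "gc n z w \<Longrightarrow> gc n (z ^ k) (w ^ k)"
  by (induction k) (auto intro: gc_mult)
lemma gc_cnj: "gc n z w \<Longrightarrow> gc n (cnj z) (cnj w)"
  by (simp add: gc_def of_int_dvd_gi) (metis dvd_minus_iff minus_diff_eq)
lemma gc_dvd: "gc n z w \<Longrightarrow> m dvd n \<Longrightarrow> gc m z w"
  unfolding gc_def by (meson dvd_trans of_int_dvd_gi)
lemma gc_iff: "gc n z w \<longleftrightarrow> [re z = re w] (mod n) \<and> [im z = im w] (mod n)"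
  by (simp add: gc_def of_int_dvd_gi cong_iff_dvd_diff dvd_diff_commute)

definition red :: "int \<Rightarrow> gi \<Rightarrow> gi" where "red n z = GI (re z mod n) (im z mod n)"

lemma red_simps[simp]: "re (red n z) = re z mod n" "im (red n z) = im z mod n"
  by (simp_all add: red_def)

lemma red_eq_iff: "red n z = red n w \<longleftrightarrow> gc n z w"
  by (simp add: gi_eq_iff gc_iff cong_def)

lemma gc_red: "gc n (red n z) z"
  by (simp add: gc_iff cong_def)

definition tg :: "int \<times> int \<Rightarrow> gi" where "tg x = GI (fst x) (snd x)"
definition fg :: "gi \<Rightarrow> int \<times> int" where "fg z = (re z, im z)"

lemma tg_fg[simp]: "tg (fg z) = z" by (simp add: tg_def fg_def)
lemma fg_tg[simp]: "fg (tg x) = x" by (simp add: tg_def fg_def)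
lemma tg_simps[simp]: "re (tg x) = fst x" "im (tg x) = snd x" by (simp_all add: tg_def)
lemma tg_inj: "tg x = tg y \<longleftrightarrow> x = y" by (metis fg_tg)

lemma red_red[simp]: "red n (red n z) = red n z" by (simp add: gi_eq_iff)

lemma gm: "gauss_mult n x y = fg (red (int n) (tg x * tg y))"
  by (simp add: gauss_mult_def fg_def)

lemma G_simps: "mult (G n) = gauss_mult n" "one (G n) = (1 mod int n, 0)"
  by (simp_all add: G_def)

lemma G_one: "one (G n) = fg (red (int n) 1)" by (simp add: G_def fg_def)

lemma carrier_G: "x \<in> carrier (G n) \<longleftrightarrow> red (int n) (tg x) = tg x \<and> [nrm (tg x) = 1] (mod int n)"
  if "n \<ge> 1"
proof -
  have "(0 \<le> a \<and> a < int n) \<longleftrightarrow> a mod int n = a" for a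
    using that by (metis mod_pos_pos_trivial of_nat_0_less_iff  less_le_trans zero_less_one
         linorder_not_less of_nat_1 of_nat_le_iff pos_mod_sign pos_mod_bound)
  then show ?thesis
    by (cases x) (auto simp add: G_def gi_eq_iff nrm_def)
qed

lemma G_pow: "x [^]\<^bsub>G n\<^esub> (k::nat) = fg (red (int n) (tg x ^ k))"
proof (induction k)
  case 0 then show ?case by (simp add: G_one)
next
  case (Suc k)
  have "gc (int n) (red (int n) (tg x ^ k) * tg x) (tg x ^ k * tg x)"
    by (intro gc_mult gc_red gc_refl)
  then have "red (int n) (red (int n) (tg x ^ k) * tg x) = red (int n) (tg x ^ Suc k)"
    by (simp add: red_eq_iff mult.commute)
  with Suc show ?case by (simp add: G_simps gm)
qed

lemma G_pow_one_iff: "x [^]\<^bsub>G n\<^esub> (k::nat) = \<one>\<^bsub>G n\<^esub> \<longleftrightarrow> gc (int n) (tg x ^ k) 1"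
  by (simp add: G_pow G_one red_eq_iff[symmetric]) (metis tg_fg)

lemma red_mult_cong: "red n (red n a * b) = red n (a * b)" "red n (a * red n b) = red n (a * b)"
  by (simp_all add: red_eq_iff gc_mult gc_red)

lemma gc_one_nrm: "gc n (of_int a) 1 \<longleftrightarrow> [a = 1] (mod n)"
  by (simp add: gc_iff)

lemma gc_nrm: "gc n z w \<Longrightarrow> [nrm z = nrm w] (mod n)"
proof -
  assume "gc n z w"
  then have "gc n (z * cnj z) (w * cnj w)" by (intro gc_mult gc_cnj)
  then show ?thesis by (simp add: mult_cnj gc_iff)
qed

lemma G_comm_group: "comm_group (G n)" if "n \<ge> 2"
proof -
  have n1: "n \<ge> 1" using that by simp
  note cG = carrier_G[OF n1]
  show ?thesis
  proof (rule comm_groupI)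
    fix x y assume x: "x \<in> carrier (G n)" and y: "y \<in> carrier (G n)"
    have "gc (int n) (red (int n) (tg x * tg y)) (tg x * tg y)" by (rule gc_red)
    then have "gc (int n) (of_int (nrm (red (int n) (tg x * tg y)))) (of_int (nrm (tg x * tg y)))"
      by (metis gc_cnj gc_mult mult_cnj)
    moreover have "[nrm (tg x * tg y) = 1] (mod int n)"
      using x y cG by (metis cong_mult mult_1 nrm_mult)
    ultimately show "x \<otimes>\<^bsub>G n\<^esub> y \<in> carrier (G n)"
      unfolding cG G_simps gm by (simp add: gc_iff cong_def)
  next
    show "\<one>\<^bsub>G n\<^esub> \<in> carrier (G n)"
      using that by (simp add: cG G_simps tg_def gi_eq_iff nrm_def)
  next
    fix x y z assume "x \<in> carrier (G n)" "y \<in> carrier (G n)" "z \<in> carrier (G n)"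
    show "x \<otimes>\<^bsub>G n\<^esub> y \<otimes>\<^bsub>G n\<^esub> z = x \<otimes>\<^bsub>G n\<^esub> (y \<otimes>\<^bsub>G n\<^esub> z)"
      by (simp add: G_simps gm red_mult_cong mult.assoc)
  next
    fix x y assume "x \<in> carrier (G n)" "y \<in> carrier (G n)"
    show "x \<otimes>\<^bsub>G n\<^esub> y = y \<otimes>\<^bsub>G n\<^esub> x"
      by (simp add: G_simps gm mult.commute)
  next
    fix x assume x: "x \<in> carrier (G n)"
    show "\<one>\<^bsub>G n\<^esub> \<otimes>\<^bsub>G n\<^esub> x = x"
    proof -
      have "\<one>\<^bsub>G n\<^esub> \<otimes>\<^bsub>G n\<^esub> x = fg (red (int n) (red (int n) 1 * tg x))"
        unfolding G_one G_simps(1) gm by simp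
      also have "\<dots> = fg (red (int n) (tg x))" by (simp add: red_mult_cong)
      also have "\<dots> = x" using x cG by simp
      finally show ?thesis .
    qed
  next
    fix x assume x: "x \<in> carrier (G n)"
    let ?y = "fg (red (int n) (cnj (tg x)))"
    have "?y \<in> carrier (G n)"
    proof -
      have "[nrm (red (int n) (cnj (tg x))) = nrm (cnj (tg x))] (mod int n)"
        by (rule gc_nrm[OF gc_red])
      moreover have "nrm (cnj (tg x)) = nrm (tg x)" by (simp add: nrm_def)
      ultimately show ?thesis using x unfolding cG by (auto intro: cong_trans)
    qed
    moreover have "?y \<otimes>\<^bsub>G n\<^esub> x = \<one>\<^bsub>G n\<^esub>"
    proof -
      have "red (int n) (red (int n) (cnj (tg x)) * tg x) = red (int n) (of_int (nrm (tg x)))"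
        by (simp add: red_mult_cong mult_cnj[symmetric] mult.commute)
      also have "\<dots> = red (int n) 1"
        using x cG by (simp add: red_eq_iff gc_one_nrm)
      finally show ?thesis by (simp add: G_simps gm G_one[symmetric])
    qed
    ultimately show "\<exists>y\<in>carrier (G n). y \<otimes>\<^bsub>G n\<^esub> x = \<one>\<^bsub>G n\<^esub>" by blast
  qed
qed

lemma pow_carrier_upd: "x [^]\<^bsub>M\<lparr>carrier := S\<rparr>\<^esub> (k::nat) = x [^]\<^bsub>M\<^esub> k"
  by (induction k) simp_all

lemma (in comm_group) GEN:
  assumes fin: "finite (carrier G)" and H: "H \<subseteq> carrier G" "4 \<le> card H"
    and Hsq: "\<forall>h\<in>H. h \<otimes> h = \<one>"
  shows "\<exists>k>0. k < order G \<and> (\<forall>x\<in>carrier G. x [^] k = \<one>)"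
proof -
  define S where "S = (\<lambda>x. x \<otimes> x) ` carrier G"
  have finS: "finite S" using fin S_def by simp
  have subS: "subgroup S G"
  proof
    show "S \<subseteq> carrier G" by (auto simp: S_def)
    show "\<one> \<in> S" unfolding S_def by (rule image_eqI[of _ _ \<one>]) auto
  next
    fix a b assume "a \<in> S" "b \<in> S"
    then obtain x y where xy: "x \<in> carrier G" "y \<in> carrier G" "a = x \<otimes> x" "b = y \<otimes> y"
      by (auto simp: S_def)
    then have "a \<otimes> b = (x \<otimes> y) \<otimes> (x \<otimes> y)" by (simp add: m_ac)
    then show "a \<otimes> b \<in> S" using xy by (auto simp: S_def)
  next
    fix a assume "a \<in> S"
    then obtain x where x: "x \<in> carrier G" "a = x \<otimes> x" by (auto simp: S_def)
    then have "inv a = inv x \<otimes> inv x" by (simp add: inv_mult)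
    then show "inv a \<in> S" using x by (auto simp: S_def)
  qed
  interpret S: group "G\<lparr>carrier := S\<rparr>" using subgroup.subgroup_is_group[OF subS] is_group .
  define c where "c = card S"
  have Sne: "S \<noteq> {}" using S_def by auto
  then have c0: "c > 0" using finS c_def by (simp add: card_gt_0_iff)
  have powS: "y [^] c = \<one>" if "y \<in> S" for y
    using S.pow_order_eq_1[of y] that by (simp add: pow_carrier_upd order_def c_def)
  have all: "x [^] (2 * c) = \<one>" if x: "x \<in> carrier G" for x
  proof -
    have "x [^] (2 * c) = (x [^] (2::nat)) [^] c" using x by (simp add: nat_pow_pow)
    also have "x [^] (2::nat) = x \<otimes> x" using x by (simp add: numeral_2_eq_2)
    also have "(x \<otimes> x) [^] c = \<one>" using x by (intro powS) (auto simp: S_def)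
    finally show ?thesis .
  qed
  define F where "F y = {x \<in> carrier G. x \<otimes> x = y}" for y
  have cover: "carrier G = (\<Union>y\<in>S. F y)" by (auto simp: F_def S_def)
  have fibre: "4 \<le> card (F y)" if "y \<in> S" for y
  proof -
    obtain x0 where x0: "x0 \<in> carrier G" "y = x0 \<otimes> x0" using \<open>y \<in> S\<close> by (auto simp: S_def)
    have sub: "(\<lambda>h. x0 \<otimes> h) ` H \<subseteq> F y"
    proof
      fix z assume "z \<in> (\<lambda>h. x0 \<otimes> h) ` H"
      then obtain h where h: "h \<in> H" "z = x0 \<otimes> h" by auto
      have hc: "h \<in> carrier G" using H h by auto
      have "z \<otimes> z = (x0 \<otimes> x0) \<otimes> (h \<otimes> h)" using h hc x0 by (simp add: m_ac)
      then show "z \<in> F y" using h hc x0 Hsq by (auto simp: F_def)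
    qed
    have "inj_on (\<lambda>h. x0 \<otimes> h) H" using H x0 by (auto simp: inj_on_def subsetD)
    then have "card ((\<lambda>h. x0 \<otimes> h) ` H) = card H" by (simp add: card_image)
    moreover have "finite (F y)" using fin by (simp add: F_def)
    ultimately show ?thesis using card_mono[OF _ sub] H by simp
  qed
  have "order G = (\<Sum>y\<in>S. card (F y))"
    unfolding order_def cover
    by (rule card_UN_disjoint) (use finS fin in \<open>auto simp: F_def\<close>)
  also have "\<dots> \<ge> (\<Sum>y\<in>S. 4)" by (intro sum_mono fibre)
  finally have "4 * c \<le> order G" using c_def by simp
  then have "2 * c < order G" using c0 by simp
  then show ?thesis using all c0 by (intro exI[of _ "2 * c"]) auto
qed

lemma fin_G: "finite (carrier (G n))"
proof -
  have "carrier (G n) \<subseteq> {0..<int n} \<times> {0..<int n}" by (auto simp: G_def)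
  then show ?thesis by (rule finite_subset) simp
qed

lemma Phi_pos: "Phi n > 0" if "n \<ge> 2"
proof -
  interpret comm_group "G n" using G_comm_group[OF that] .
  show ?thesis unfolding Phi_def using fin_G one_closed by (auto simp: card_gt_0_iff)
qed

lemma Lambda_props: assumes "n \<ge> 2"
  shows "0 < Lambda n" "Lambda n \<le> Phi n" "\<forall>x\<in>carrier (G n). x [^]\<^bsub>G n\<^esub> Lambda n = \<one>\<^bsub>G n\<^esub>"
proof -
  interpret comm_group "G n" using G_comm_group[OF assms] .
  have P: "0 < Phi n \<and> (\<forall>x\<in>carrier (G n). x [^]\<^bsub>G n\<^esub> Phi n = \<one>\<^bsub>G n\<^esub>)"
    using Phi_pos[OF assms] pow_order_eq_1 by (simp add: Phi_def order_def)
  have "0 < Lambda n \<and> (\<forall>x\<in>carrier (G n). x [^]\<^bsub>G n\<^esub> Lambda n = \<one>\<^bsub>G n\<^esub>)"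
    unfolding Lambda_def by (rule LeastI[of _ "Phi n"]) (rule P)
  then show "0 < Lambda n" "\<forall>x\<in>carrier (G n). x [^]\<^bsub>G n\<^esub> Lambda n = \<one>\<^bsub>G n\<^esub>" by auto
  show "Lambda n \<le> Phi n" unfolding Lambda_def by (rule Least_le) (rule P)
qed

lemma Lambda_le: "0 < k \<Longrightarrow> \<forall>x\<in>carrier (G n). x [^]\<^bsub>G n\<^esub> k = \<one>\<^bsub>G n\<^esub> \<Longrightarrow> Lambda n \<le> k"
  unfolding Lambda_def by (rule Least_le) simp

lemma NEG:
  assumes n: "n \<ge> 2" and H: "H \<subseteq> carrier (G n)" "4 \<le> card H"
    and Hsq: "\<forall>h\<in>H. gauss_mult n h h = (1 mod int n, 0)"
  shows "Lambda n < Phi n"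
proof -
  interpret comm_group "G n" using G_comm_group[OF n] .
  obtain k where "k > 0" "k < order (G n)" "\<forall>x\<in>carrier (G n). x [^]\<^bsub>G n\<^esub> k = \<one>\<^bsub>G n\<^esub>"
    using GEN[OF fin_G H] Hsq by (auto simp: G_simps)
  then show ?thesis using Lambda_le[of k n] by (simp add: Phi_def order_def)
qed

lemma cong_w: "x = y + N * t \<Longrightarrow> [x = y] (mod N)" for x y N t :: int
  by (simp add: cong_iff_dvd_diff)

lemma mod_w: "x = y + N * t \<Longrightarrow> x mod N = y mod N" for x y N t :: int
  by simp

lemma mem_G: "x \<in> carrier (G n) \<longleftrightarrow> 0 \<le> fst x \<and> fst x < int n \<and> 0 \<le> snd x \<and> snd x < int n \<and>
   [fst x ^ 2 + snd x ^ 2 = 1] (mod int n)"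
  by (cases x) (simp add: G_def)

lemma sq_gm: "gauss_mult n x x = ((fst x * fst x - snd x * snd x) mod int n, (2 * fst x * snd x) mod int n)"
  by (simp add: gauss_mult_def algebra_simps)

lemma even_case: assumes "n = 2 * m" "m \<ge> 2" shows "Lambda n < Phi n"
proof -
  define N where "N = int n"
  have N: "N = 2 * int m" "int m \<ge> 2" using assms N_def by auto
  define H where "H = {(1, 0), (N - 1, 0), (int m + 1, int m), (int m - 1, int m)}"
  have nN: "int n = N" by (simp add: N_def)
  have c1: "(1, 0) \<in> carrier (G n)" unfolding mem_G nN using N
    by (auto intro!: cong_w[where t = 0])
  have c2: "(N - 1, 0) \<in> carrier (G n)" unfolding mem_G nN using N
    by (auto intro!: cong_w[where t = "N - 2"] simp: algebra_simps power2_eq_square)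
  have c3: "(int m + 1, int m) \<in> carrier (G n)" unfolding mem_G nN using N
    by (auto intro!: cong_w[where t = "int m + 1"] simp: algebra_simps power2_eq_square)
  have c4: "(int m - 1, int m) \<in> carrier (G n)" unfolding mem_G nN using N
    by (auto intro!: cong_w[where t = "int m - 1"] simp: algebra_simps power2_eq_square)
  have s1: "gauss_mult n (1, 0) (1, 0) = (1 mod int n, 0)" by (simp add: sq_gm)
  have s2: "gauss_mult n (N - 1, 0) (N - 1, 0) = (1 mod int n, 0)" unfolding sq_gm nN
    by (auto intro!: mod_w[where t = "N - 2"] simp: algebra_simps power2_eq_square)
  have s3: "gauss_mult n (int m + 1, int m) (int m + 1, int m) = (1 mod int n, 0)" unfolding sq_gm nN using N
    by (auto intro!: mod_w[where t = 1] mod_w[where t = "int m + 1" and y = 0] simp: algebra_simps power2_eq_square)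
  have s4: "gauss_mult n (int m - 1, int m) (int m - 1, int m) = (1 mod int n, 0)" unfolding sq_gm nN using N
    by (auto intro!: mod_w[where t = "-1"] mod_w[where t = "int m - 1" and y = 0] simp: algebra_simps power2_eq_square)
  have "H \<subseteq> carrier (G n)" using c1 c2 c3 c4 by (simp add: H_def)
  moreover have "card H = 4" unfolding H_def using N by auto
  moreover have "\<forall>h\<in>H. gauss_mult n h h = (1 mod int n, 0)" using s1 s2 s3 s4 by (simp add: H_def)
  ultimately show ?thesis using NEG[of n H] assms by simp
qed


lemma coprime_case: assumes "n = a * b" "coprime a b" "a \<ge> 3" "b \<ge> 3" shows "Lambda n < Phi n"
proof -
  define N where "N = int n"
  have nN: "int n = N" by (simp add: N_def)
  have cop: "coprime (int a) (int b)" using assms by simp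
  obtain c0 where c0: "[c0 = 1] (mod int a)" "[c0 = -1] (mod int b)"
    using binary_chinese_remainder_int[OF cop] by blast
  define c where "c = c0 mod N"
  have "9 \<le> a * b" using mult_mono[OF assms(3) assms(4)] by simp
  then have N3: "N \<ge> 9" using assms N_def by linarith
  have NN: "N = int a * int b" using assms N_def by simp
  have "[c = c0] (mod N)" by (simp add: c_def cong_def)
  then have "[c = c0] (mod int a)" "[c = c0] (mod int b)" using NN
    by (auto elim!: cong_dvd_modulus)
  then have ca: "[c = 1] (mod int a)" and cb: "[c = -1] (mod int b)" using c0 by (metis cong_trans)+
  have crange: "0 \<le> c" "c < N" using N3 by (auto simp: c_def)
  have c_ne0: "c \<noteq> 0"
  proof
    assume "c = 0" then have "[0 = 1] (mod int a)" using ca by simp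
    then show False using assms by (simp add: cong_def)
  qed
  have a_c1: "int a dvd c - 1" using ca by (simp add: cong_iff_dvd_diff)
  have b_c1: "int b dvd c + 1" using cb by (simp add: cong_iff_dvd_diff)
  have "int a dvd c * c - 1" proof -
    have "c * c - 1 = (c - 1) * (c + 1)" by (simp add: algebra_simps)
    then show ?thesis using a_c1 by simp
  qed
  moreover have "int b dvd c * c - 1" proof -
    have "c * c - 1 = (c - 1) * (c + 1)" by (simp add: algebra_simps)
    then show ?thesis using b_c1 by simp
  qed
  ultimately have csq: "N dvd c * c - 1" using NN cop by (simp add: divides_mult)
  have c_ne1: "c \<noteq> 1"
  proof
    assume "c = 1" then have "int b dvd 2" using b_c1 by simp
    then have "int b \<le> 2" by (rule zdvd_imp_le) simp
    then show False using assms by linarith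
  qed
  have c_neN1: "c \<noteq> N - 1"
  proof
    assume "c = N - 1" then have "N - 2 = c - 1" by simp
    then have "int a dvd N - 2" using a_c1 by simp
    moreover have "int a dvd N" using NN by simp
    ultimately have "int a dvd N - (N - 2)" by (rule dvd_diff[rotated])
    then have "int a dvd 2" by simp
    then have "int a \<le> 2" by (rule zdvd_imp_le) simp
    then show False using assms by linarith
  qed
  have c_neNc: "c \<noteq> N - c"
  proof
    assume "c = N - c" then have "N = 2 * c" by simp
    then have "int a dvd 2 * c" using NN by (metis dvd_triv_left)
    moreover have "int a dvd 2 * (c - 1)" using a_c1 by (rule dvd_mult)
    ultimately have "int a dvd 2 * c - 2 * (c - 1)" by (rule dvd_diff)
    then have "int a dvd 2" by (simp add: algebra_simps)
    then have "int a \<le> 2" by (rule zdvd_imp_le) simp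
    then show False using assms by linarith
  qed
  obtain t where t: "c * c - 1 = N * t" using csq by (auto elim: dvdE)
  define H :: "(int \<times> int) set" where "H = {(1, 0), (N - 1, 0), (c, 0), (N - c, 0)}"
  have c1: "(1, 0) \<in> carrier (G n)" unfolding mem_G nN using N3
    by (auto intro!: cong_w[where t = 0])
  have c2: "(N - 1, 0) \<in> carrier (G n)" unfolding mem_G nN using N3
    by (auto intro!: cong_w[where t = "N - 2"] simp: algebra_simps power2_eq_square)
  have c3: "(c, 0) \<in> carrier (G n)" unfolding mem_G nN using crange t
    by (auto intro!: cong_w[where t = t] simp: algebra_simps power2_eq_square)
  have c4: "(N - c, 0) \<in> carrier (G n)" unfolding mem_G nN using crange t c_ne0
    by (auto intro!: cong_w[where t = "N - 2 * c + t"] simp: algebra_simps power2_eq_square)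
  have s1: "gauss_mult n (1, 0) (1, 0) = (1 mod int n, 0)" by (simp add: sq_gm)
  have s2: "gauss_mult n (N - 1, 0) (N - 1, 0) = (1 mod int n, 0)" unfolding sq_gm nN
    by (auto intro!: mod_w[where t = "N - 2"] simp: algebra_simps power2_eq_square)
  have s3: "gauss_mult n (c, 0) (c, 0) = (1 mod int n, 0)" unfolding sq_gm nN using t
    by (auto intro!: mod_w[where t = t] simp: algebra_simps power2_eq_square)
  have s4: "gauss_mult n (N - c, 0) (N - c, 0) = (1 mod int n, 0)" unfolding sq_gm nN using t
    by (auto intro!: mod_w[where t = "N - 2 * c + t"] simp: algebra_simps power2_eq_square)
  have "H \<subseteq> carrier (G n)" using c1 c2 c3 c4 by (simp add: H_def)
  moreover have "card H = 4" unfolding H_def using N3 c_ne1 c_neN1 c_neNc c_ne0 by auto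
  moreover have "\<forall>h\<in>H. gauss_mult n h h = (1 mod int n, 0)" using s1 s2 s3 s4 by (simp add: H_def)
  moreover have "n \<ge> 2" using N3 N_def by simp
  ultimately show ?thesis using NEG[of n H] by simp
qed


lemma forward:
  assumes n: "n \<ge> 2" and nc: "\<not> (n = 2 \<or> (\<exists>p r. prime p \<and> odd p \<and> r > 0 \<and> n = p ^ r))"
  shows "Lambda n < Phi n"
proof (cases "even n")
  case True
  then obtain m where m: "n = 2 * m" by (auto elim: evenE)
  then have "m \<ge> 2" using n nc by auto
  then show ?thesis using even_case[OF m] by simp
next
  case False
  obtain p where p: "prime p" "p dvd n" using n prime_factor_nat[of n] by auto
  define r where "r = multiplicity p n"
  define b where "b = n div p ^ r"
  have nab: "n = p ^ r * b" using multiplicity_dvd[of p n] by (simp add: r_def b_def)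
  have r0: "r > 0" using p n by (simp add: r_def prime_multiplicity_gt_zero_iff)
  have oddp: "odd p" using p False by (meson dvd_trans)
  have "p \<ge> 2" using p prime_ge_2_nat by auto
  moreover have "p \<noteq> 2" using oddp by auto
  ultimately have p3: "p \<ge> 3" by simp
  have "p ^ 1 \<le> p ^ r" using r0 prime_ge_2_nat[OF p(1)] by (intro power_increasing) auto
  then have a3: "p ^ r \<ge> 3" using p3 by simp
  have "\<not> p dvd b" unfolding b_def r_def by (rule multiplicity_decompose) (use n p(1) not_prime_unit in auto)
  then have "coprime p b" using p(1) by (simp add: prime_imp_coprime)
  then have cop: "coprime (p ^ r) b" by simp
  have "b \<noteq> 0" using nab n by (metis mult_0_right not_numeral_le_zero)
  moreover have "b \<noteq> 1" using nab nc p(1) oddp r0 by (metis mult_1_right)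
  moreover have "odd b" using False nab by simp
  ultimately have b3: "b \<ge> 3" by presburger
  show ?thesis by (rule coprime_case[OF nab cop a3 b3])
qed

lemma fermat_int: assumes "prime p" shows "[a ^ p = a] (mod int p)"
proof (cases "int p dvd a")
  case True
  have "p > 0" using assms prime_gt_0_nat by auto
  have "a ^ p = a * a ^ (p - 1)" using \<open>p > 0\<close> by (simp add: power_eq_if)
  then have "int p dvd a ^ p" using True by simp
  then show ?thesis using True by (simp add: cong_iff_dvd_diff dvd_diff)
next
  case False
  define c where "c = nat (a mod int p)"
  have p0: "int p > 0" using assms prime_gt_0_nat by auto
  have ic: "int c = a mod int p" using p0 by (simp add: c_def)
  have "\<not> p dvd c"
  proof
    assume "p dvd c" then have "int p dvd int c" by simp
    then show False using False ic by (simp add: dvd_mod_iff)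
  qed
  then have "[c ^ (p - 1) = 1] (mod p)" using fermat_theorem[OF assms] by simp
  then have "[int (c ^ (p - 1)) = int 1] (mod int p)" using cong_int_iff by blast
  then have h1: "[int c ^ (p - 1) = 1] (mod int p)" by simp
  have "[int c = a] (mod int p)" using ic by (simp add: cong_def)
  then have "[int c ^ (p - 1) = a ^ (p - 1)] (mod int p)" by (rule cong_pow)
  then have "[a ^ (p - 1) = 1] (mod int p)" using h1 cong_sym cong_trans by blast
  then have "[a * a ^ (p - 1) = a * 1] (mod int p)" by (rule cong_scalar_left)
  moreover have "a * a ^ (p - 1) = a ^ p" using assms prime_gt_0_nat[OF assms]
    by (simp add: power_eq_if)
  ultimately show ?thesis by simp
qed

lemma gc_add: "gc n z w \<Longrightarrow> gc n z' w' \<Longrightarrow> gc n (z + z') (w + w')"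
proof -
  assume a: "gc n z w" "gc n z' w'"
  have "(z + z') - (w + w') = (z - w) + (z' - w')" by (simp add: algebra_simps)
  then show ?thesis using a unfolding gc_def by (metis dvd_add)
qed

lemma gc_of_int: "gc n (of_int a) (of_int b) \<longleftrightarrow> [a = b] (mod n)"
  by (simp add: gc_iff)

lemma frob_sum: assumes "prime p"
  shows "gc (int p) ((A + B) ^ p) (A ^ p + B ^ p)"
proof -
  have p2: "p \<ge> 2" using assms prime_ge_2_nat by auto
  define f where "f k = of_nat (p choose k) * A ^ k * B ^ (p - k)" for k
  have "(A + B) ^ p = (\<Sum>k\<le>p. f k)" by (simp add: binomial_ring f_def)
  also have "{..p} = insert 0 (insert p {1..<p})" using p2 by auto
  also have "(\<Sum>k\<in>insert 0 (insert p {1..<p}). f k) = f 0 + (f p + (\<Sum>k\<in>{1..<p}. f k))"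
    using p2 by simp
  finally have eq0: "(A + B) ^ p = f 0 + (f p + (\<Sum>k\<in>{1..<p}. f k))" .
  have "f 0 + f p = A ^ p + B ^ p" using p2 by (simp add: f_def add.commute)
  then have eq: "(A + B) ^ p - (A ^ p + B ^ p) = (\<Sum>k\<in>{1..<p}. f k)" by (simp add: algebra_simps eq0)
  have "(of_int (int p) :: gi) dvd (\<Sum>k\<in>{1..<p}. f k)"
  proof (rule dvd_sum)
    fix k assume k: "k \<in> {1..<p}"
    then have "p dvd (p choose k)" using assms by (intro dvd_choose_prime) auto
    then obtain c where "p choose k = p * c" by (auto elim: dvdE)
    then have "f k = of_int (int p) * (of_nat c * A ^ k * B ^ (p - k))" by (simp add: f_def)
    then show "(of_int (int p) :: gi) dvd f k" by simp
  qed
  then show ?thesis unfolding gc_def eq .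
qed

definition ii :: gi where "ii = GI 0 1"

lemma gi_decomp: "z = of_int (re z) + ii * of_int (im z)"
  by (simp add: gi_eq_iff ii_def)

lemma ii_sq: "ii ^ 2 = -1" by (simp add: gi_eq_iff ii_def power2_eq_square)
lemma ii_4: "ii ^ (4 * q) = 1"
proof -
  have "ii ^ 4 = (ii ^ 2) ^ 2" by (simp flip: power_mult)
  then have "ii ^ 4 = 1" by (simp add: ii_sq)
  then show ?thesis by (simp add: power_mult)
qed

lemma frob: assumes "prime p" "odd p"
  shows "(p mod 4 = 1 \<longrightarrow> gc (int p) (z ^ p) z) \<and> (p mod 4 = 3 \<longrightarrow> gc (int p) (z ^ p) (cnj z))"
proof -
  let ?A = "of_int (re z) :: gi" and ?B = "ii * of_int (im z)"
  have g1: "gc (int p) (z ^ p) (?A ^ p + ?B ^ p)"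
    using frob_sum[OF assms(1), of ?A ?B] gi_decomp[of z] by simp
  have ra: "gc (int p) (?A ^ p) ?A"
    unfolding of_int_power[symmetric] gc_of_int by (rule fermat_int[OF assms(1)])
  have rb: "gc (int p) (of_int (im z) ^ p) (of_int (im z))"
    unfolding of_int_power[symmetric] gc_of_int by (rule fermat_int[OF assms(1)])
  have "p mod 4 = 1 \<or> p mod 4 = 3" using assms(2) by presburger
  show ?thesis
  proof (intro conjI impI)
    assume p1: "p mod 4 = 1"
    define q where "q = p div 4"
    have q: "p = 4 * q + 1" using p1 unfolding q_def by presburger
    have "ii ^ p = ii ^ (4 * q) * ii" unfolding q by (simp only: power_add power_one_right)
    then have iip: "ii ^ p = ii" by (simp add: ii_4)
    have "?B ^ p = ii * of_int (im z) ^ p" by (simp add: power_mult_distrib iip)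
    moreover have "gc (int p) (ii * of_int (im z) ^ p) ?B" by (intro gc_mult gc_refl rb)
    ultimately have "gc (int p) (?B ^ p) ?B" by simp
    with ra have "gc (int p) (?A ^ p + ?B ^ p) (?A + ?B)" by (rule gc_add)
    then have "gc (int p) (z ^ p) (?A + ?B)" using g1 by (rule gc_trans[rotated])
    then show "gc (int p) (z ^ p) z" using gi_decomp[of z] by simp
  next
    assume p3: "p mod 4 = 3"
    define q where "q = p div 4"
    have q: "p = 4 * q + 2 + 1" using p3 unfolding q_def by presburger
    have "ii ^ p = ii ^ (4 * q) * ii ^ 2 * ii" unfolding q by (simp only: power_add power_one_right)
    then have iip: "ii ^ p = - ii" by (simp add: ii_4 ii_sq)
    have "?B ^ p = (- ii) * of_int (im z) ^ p" by (simp add: power_mult_distrib iip)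
    moreover have "gc (int p) ((- ii) * of_int (im z) ^ p) ((- ii) * of_int (im z))" by (intro gc_mult gc_refl rb)
    ultimately have "gc (int p) (?B ^ p) (- ?B)" by simp
    with ra have "gc (int p) (?A ^ p + ?B ^ p) (?A + - ?B)" by (rule gc_add)
    then have "gc (int p) (z ^ p) (?A + - ?B)" using g1 by (rule gc_trans[rotated])
    moreover have "?A + - ?B = cnj z" by (simp add: gi_eq_iff ii_def)
    ultimately show "gc (int p) (z ^ p) (cnj z)" by simp
  qed
qed

lemma keybin:
  fixes u :: gi
  assumes p: "prime p" "p \<ge> 3" and j: "j \<ge> 1"
  defines "Q \<equiv> (of_nat p :: gi)"
  shows "\<exists>v. (1 + Q ^ j * u) ^ p = 1 + Q ^ (j + 1) * u + Q ^ (j + 2) * v"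
proof -
  define f where "f k = of_nat (p choose k) * (Q ^ j * u) ^ k" for k
  have "(Q ^ j * u + 1) ^ p = (\<Sum>k\<le>p. f k)" by (simp add: binomial_ring f_def)
  also have "{..p} = insert 0 (insert 1 {2..p})" using p by auto
  also have "(\<Sum>k\<in>insert 0 (insert 1 {2..p}). f k) = f 0 + (f 1 + (\<Sum>k\<in>{2..p}. f k))" by simp
  finally have eq0: "(1 + Q ^ j * u) ^ p = f 0 + (f 1 + (\<Sum>k\<in>{2..p}. f k))" by (simp add: add.commute)
  have f0: "f 0 = 1" by (simp add: f_def)
  have f1: "f 1 = Q ^ (j + 1) * u" by (simp add: f_def Q_def algebra_simps)
  have "Q ^ (j + 2) dvd (\<Sum>k\<in>{2..p}. f k)"
  proof (rule dvd_sum)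
    fix k assume k: "k \<in> {2..p}"
    have fk: "f k = of_nat (p choose k) * (Q ^ (j * k) * u ^ k)"
      by (simp add: f_def power_mult_distrib power_mult)
    show "Q ^ (j + 2) dvd f k"
    proof (cases "k = p")
      case True
      have "j * 3 \<le> j * p" using p(2) by simp
      then have "j + 2 \<le> j * p" using j by linarith
      then have "Q ^ (j + 2) dvd Q ^ (j * k)" using True by (intro le_imp_power_dvd) simp
      then show ?thesis using True fk by simp
    next
      case False
      then have "p dvd (p choose k)" using p k by (intro dvd_choose_prime) auto
      then obtain c where c: "p choose k = p * c" by (auto elim: dvdE)
      have "j * 2 \<le> j * k" using k by simp
      then have "j + 1 \<le> j * k" using j by linarith
      then have d1: "Q ^ (j + 1) dvd Q ^ (j * k)" by (intro le_imp_power_dvd)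
      have "f k = Q * (of_nat c * (Q ^ (j * k) * u ^ k))" using fk c by (simp add: Q_def)
      moreover have "Q ^ (j + 2) = Q * Q ^ (j + 1)" by simp
      moreover have "Q ^ (j + 1) dvd of_nat c * (Q ^ (j * k) * u ^ k)" using d1 by simp
      ultimately show ?thesis by (simp add: mult_dvd_mono)
    qed
  qed
  then obtain v where "(\<Sum>k\<in>{2..p}. f k) = Q ^ (j + 2) * v" by (auto elim: dvdE)
  then show ?thesis using eq0 f0 f1 by (intro exI[of _ v]) (simp add: add.assoc)
qed


lemma gc_one_iff: "gc (int p ^ j) w 1 \<longleftrightarrow> (\<exists>u. w = 1 + (of_nat p :: gi) ^ j * u)"
proof -
  have "gc (int p ^ j) w 1 \<longleftrightarrow> (of_nat p :: gi) ^ j dvd w - 1" by (simp add: gc_def)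
  also have "\<dots> \<longleftrightarrow> (\<exists>u. w = 1 + (of_nat p :: gi) ^ j * u)"
    by (auto elim!: dvdE simp: algebra_simps)
  finally show ?thesis .
qed

lemma L1: assumes "prime p" "p \<ge> 3" "j \<ge> 1" "gc (int p ^ j) w 1"
  shows "gc (int p ^ (j + 1)) (w ^ p) 1"
proof -
  let ?Q = "of_nat p :: gi"
  obtain u where u: "w = 1 + ?Q ^ j * u" using assms(4) gc_one_iff by blast
  obtain v where v: "(1 + ?Q ^ j * u) ^ p = 1 + ?Q ^ (j + 1) * u + ?Q ^ (j + 2) * v"
    using keybin[OF assms(1-3)] by blast
  have "w ^ p = 1 + ?Q ^ (j + 1) * (u + ?Q * v)" using u v by (simp add: algebra_simps)
  then show ?thesis using gc_one_iff by blast
qed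

lemma L2: assumes "prime p" "p \<ge> 3" "j \<ge> 1" "gc (int p ^ j) w 1" "gc (int p ^ (j + 2)) (w ^ p) 1"
  shows "gc (int p ^ (j + 1)) w 1"
proof -
  let ?Q = "of_nat p :: gi"
  obtain u where u: "w = 1 + ?Q ^ j * u" using assms(4) gc_one_iff by blast
  obtain v where v: "(1 + ?Q ^ j * u) ^ p = 1 + ?Q ^ (j + 1) * u + ?Q ^ (j + 2) * v"
    using keybin[OF assms(1-3)] by blast
  obtain v' where v': "w ^ p = 1 + ?Q ^ (j + 2) * v'" using assms(5) gc_one_iff by blast
  have e: "1 + ?Q ^ (j + 1) * u + ?Q ^ (j + 2) * v = 1 + ?Q ^ (j + 2) * v'"
    by (simp only: v[symmetric] u[symmetric] v')
  then have "?Q ^ (j + 1) * u + ?Q ^ (j + 2) * v = ?Q ^ (j + 2) * v'" by (simp only: add.assoc add_left_cancel)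
  then have "?Q ^ (j + 1) * u = ?Q ^ (j + 2) * v' - ?Q ^ (j + 2) * v" by (simp only: eq_diff_eq)
  then have eqq: "?Q ^ (j + 1) * u = ?Q ^ (j + 2) * (v' - v)" by (simp only: right_diff_distrib)
  then have "re (?Q ^ (j + 1) * u) = re (?Q ^ (j + 2) * (v' - v))" by simp
  moreover have "?Q ^ k = of_int (int p ^ k)" for k by simp
  ultimately have "int p ^ (j + 1) * re u = int p ^ (j + 1) * (int p * re (v' - v))"
    by (simp del: of_int_power of_nat_power add: of_int_gi_mult)
  then have r: "re u = int p * re (v' - v)" using assms(1) by (simp add: prime_gt_0_nat)
  have "im (?Q ^ (j + 1) * u) = im (?Q ^ (j + 2) * (v' - v))"
    using eqq by simp
  then have "int p ^ (j + 1) * im u = int p ^ (j + 1) * (int p * im (v' - v))"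
    using \<open>\<And>k. ?Q ^ k = _\<close> by (simp del: of_int_power of_nat_power add: of_int_gi_mult)
  then have i: "im u = int p * im (v' - v)" using assms(1) by (simp add: prime_gt_0_nat)
  have "u = ?Q * (v' - v)" using r i by (simp add: gi_eq_iff)
  then have "w = 1 + ?Q ^ j * (?Q * (v' - v))" using u by (simp only:)
  then have "w = 1 + ?Q ^ (j + 1) * (v' - v)" by (simp add: power_add mult.assoc)
  then show ?thesis using gc_one_iff by blast
qed


lemma L1it: assumes "prime p" "p \<ge> 3" "gc (int p) w 1"
  shows "gc (int p ^ (t + 1)) (w ^ (p ^ t)) 1"
proof (induction t)
  case 0 then show ?case using assms by simp
next
  case (Suc t)
  have "gc (int p ^ (t + 1 + 1)) ((w ^ (p ^ t)) ^ p) 1" by (rule L1[OF assms(1,2) _ Suc]) simp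
  then show ?case by (simp add: power_mult[symmetric] mult.commute)
qed

lemma inner: assumes "prime p" "p \<ge> 3" "gc (int p) z 1" "gc (int p ^ (j + 1)) (z ^ p) 1" "j \<ge> 1"
  shows "gc (int p ^ j) z 1"
proof -
  have "i + 1 \<le> j \<Longrightarrow> gc (int p ^ (i + 1)) z 1" for i
  proof (induction i)
    case 0 then show ?case using assms(3) by simp
  next
    case (Suc i)
    have "int p ^ (i + 1 + 2) dvd int p ^ (j + 1)" using Suc.prems by (intro le_imp_power_dvd) simp
    then have "gc (int p ^ (i + 1 + 2)) (z ^ p) 1" using assms(4) gc_dvd by blast
    then have "gc (int p ^ (i + 1 + 1)) z 1" using L2[OF assms(1,2) _ Suc.IH] Suc.prems by simp
    then show ?case by simp
  qed
  from this[of "j - 1"] show ?thesis using assms(5) by simp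
qed

lemma L2it: assumes "prime p" "p \<ge> 3"
  shows "gc (int p) z 1 \<Longrightarrow> j \<ge> 1 \<Longrightarrow> gc (int p ^ (j + s)) (z ^ (p ^ s)) 1 \<Longrightarrow> gc (int p ^ j) z 1"
proof (induction s arbitrary: z j)
  case 0 then show ?case by simp
next
  case (Suc s)
  have "gc (int p ^ (1 + 1)) (z ^ p) 1" using L1[OF assms, of 1 z] Suc.prems by simp
  then have zp: "gc (int p) (z ^ p) 1" by (rule gc_dvd) simp
  have "gc (int p ^ (j + 1 + s)) ((z ^ p) ^ (p ^ s)) 1"
    using Suc.prems(3) by (simp add: power_mult[symmetric] mult.commute)
  then have "gc (int p ^ (j + 1)) (z ^ p) 1" using Suc.IH[OF zp, of "j + 1"] by simp
  then show ?case using inner[OF assms Suc.prems(1)] Suc.prems(2) by simp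
qed

lemma F1: assumes "prime p" "odd p" "[nrm z = 1] (mod int p)" "gc (int p) (z ^ p) 1"
  shows "gc (int p) z 1"
proof -
  have "p mod 4 = 1 \<or> p mod 4 = 3" using assms(2) by presburger
  then show ?thesis
  proof
    assume "p mod 4 = 1"
    then have "gc (int p) (z ^ p) z" using frob[OF assms(1,2)] by blast
    then show ?thesis using assms(4) gc_sym gc_trans by blast
  next
    assume "p mod 4 = 3"
    then have "gc (int p) (z ^ p) (cnj z)" using frob[OF assms(1,2)] by blast
    then have "gc (int p) (cnj z) 1" using assms(4) gc_sym gc_trans by blast
    then have "gc (int p) (z * cnj z) (z * 1)" by (intro gc_mult gc_refl)
    then have "gc (int p) z (of_int (nrm z))" by (simp add: mult_cnj gc_sym)
    moreover have "gc (int p) (of_int (nrm z)) 1"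
      using assms(3) gc_of_int[of "int p" "nrm z" 1] by simp
    ultimately show ?thesis by (rule gc_trans)
  qed
qed

lemma Fit: assumes "prime p" "odd p"
  shows "[nrm z = 1] (mod int p) \<Longrightarrow> gc (int p) (z ^ (p ^ s)) 1 \<Longrightarrow> gc (int p) z 1"
proof (induction s arbitrary: z)
  case 0 then show ?case by simp
next
  case (Suc s)
  have "[nrm (z ^ p) = 1] (mod int p)" using Suc.prems(1) by (simp add: nrm_pow) (metis cong_pow power_one)
  moreover have "gc (int p) ((z ^ p) ^ (p ^ s)) 1"
    using Suc.prems(2) by (simp add: power_mult[symmetric] mult.commute)
  ultimately have "gc (int p) (z ^ p) 1" by (rule Suc.IH)
  then show ?case by (rule F1[OF assms Suc.prems(1)])
qed

lemma mem_Gp: assumes "x \<in> carrier (G n)" "n \<ge> 1"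
  shows "red (int n) (tg x) = tg x" "[nrm (tg x) = 1] (mod int n)"
  using assms carrier_G by auto

lemma Ck: assumes p: "prime p" "odd p" and k: "1 \<le> k" "k \<le> r"
  shows "card {x \<in> carrier (G (p ^ r)). gc (int p ^ k) (tg x) 1} \<le> p ^ (r - k)"
proof -
  define S where "S = {x \<in> carrier (G (p ^ r)). gc (int p ^ k) (tg x) 1}"
  define N where "N = int p ^ r"
  have p1: "p \<ge> 1" "int p > 1" using prime_gt_1_nat[OF p(1)] by auto
  have N1: "p ^ r \<ge> 1" using p1 by simp
  have mem: "0 \<le> fst x" "fst x < N" "0 \<le> snd x" "snd x < N" "[fst x ^ 2 + snd x ^ 2 = 1] (mod N)"
    if "x \<in> S" for x using that by (auto simp: S_def mem_G N_def)
  have gk: "[fst x = 1] (mod int p ^ k)" "[snd x = 0] (mod int p ^ k)" if "x \<in> S" for x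
    using that by (auto simp: S_def gc_iff)
  have g1: "[fst x = 1] (mod int p)" if "x \<in> S" for x
  proof -
    have "int p dvd int p ^ k" using k by (simp add: dvd_power)
    then show ?thesis using gk(1)[OF that] cong_dvd_modulus by blast
  qed
  have inj: "inj_on snd S"
  proof (rule inj_onI)
    fix x y assume x: "x \<in> S" and y: "y \<in> S" and e: "snd x = snd y"
    obtain a b where xab: "x = (a, b)" by (cases x)
    obtain a' where ya: "y = (a', b)" using e xab by (cases y) auto
    have "[a ^ 2 + b ^ 2 = a' ^ 2 + b ^ 2] (mod N)"
      using mem(5)[OF x] mem(5)[OF y] xab ya by (metis cong_sym cong_trans fst_conv snd_conv)
    then have "N dvd (a ^ 2 + b ^ 2) - (a' ^ 2 + b ^ 2)" by (simp add: cong_iff_dvd_diff)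
    moreover have "(a ^ 2 + b ^ 2) - (a' ^ 2 + b ^ 2) = (a + a') * (a - a')" by (simp add: algebra_simps power2_eq_square)
    ultimately have d: "N dvd (a + a') * (a - a')" by simp
    have c2: "[a + a' = 1 + 1] (mod int p)" using g1[OF x] g1[OF y] xab ya cong_add by fastforce
    have "\<not> int p dvd a + a'"
    proof
      assume dd: "int p dvd a + a'"
      have "int p dvd (a + a') - 2" using c2 by (simp add: cong_iff_dvd_diff dvd_diff_commute)
      then have "int p dvd (a + a') - ((a + a') - 2)" using dd by (rule dvd_diff[rotated])
      then have "int p dvd 2" by simp
      then have "p dvd 2" by (metis int_dvd_int_iff of_nat_numeral)
      then have "p \<le> 2" by (rule dvd_imp_le) simp
      then have "p = 2" using prime_ge_2_nat[OF p(1)] by simp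
      then show False using p(2) by simp
    qed
    then have "coprime (int p) (a + a')" using p by (simp add: prime_imp_coprime)
    then have "coprime N (a + a')" by (simp add: N_def)
    then have "N dvd a - a'" using d by (simp add: coprime_dvd_mult_right_iff)
    moreover have "\<bar>a - a'\<bar> < N" using mem[OF x] mem[OF y] xab ya by auto
    ultimately have "a - a' = 0"
    proof (rule_tac ccontr)
      assume "N dvd a - a'" "\<bar>a - a'\<bar> < N" "a - a' \<noteq> 0"
      then have "\<bar>N\<bar> \<le> \<bar>a - a'\<bar>" using dvd_imp_le_int by blast
      then show False using \<open>\<bar>a - a'\<bar> < N\<close> by simp
    qed
    then show "x = y" using xab ya by simp
  qed
  have img: "snd ` S \<subseteq> (\<lambda>j. int p ^ k * j) ` {0..<int p ^ (r - k)}"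
  proof
    fix b assume "b \<in> snd ` S"
    then obtain x where x: "x \<in> S" "b = snd x" by auto
    then have "int p ^ k dvd b" using gk(2)[OF x(1)] by (simp add: cong_0_iff)
    then obtain j where j: "b = int p ^ k * j" by (auto elim: dvdE)
    have pk: "int p ^ k > 0" using p1 by simp
    have NN: "N = int p ^ k * int p ^ (r - k)" using k by (simp add: N_def power_add[symmetric])
    have "0 \<le> int p ^ k * j" using mem(3)[OF x(1)] x(2) j by simp
    then have "0 \<le> j" using pk by (simp add: zero_le_mult_iff)
    moreover have "int p ^ k * j < int p ^ k * int p ^ (r - k)" using mem(4)[OF x(1)] x(2) j NN by simp
    then have "j < int p ^ (r - k)" using pk by (simp add: mult_less_cancel_left)
    ultimately show "b \<in> (\<lambda>j. int p ^ k * j) ` {0..<int p ^ (r - k)}" using j by auto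
  qed
  have "card S = card (snd ` S)" using inj by (simp add: card_image)
  also have "\<dots> \<le> card ((\<lambda>j. int p ^ k * j) ` {0..<int p ^ (r - k)})"
    by (rule card_mono[OF _ img]) simp
  also have "\<dots> \<le> card {0..<int p ^ (r - k)}" by (rule card_image_le) simp
  also have "\<dots> = p ^ (r - k)" by (simp flip: of_nat_power)
  finally show ?thesis by (simp add: S_def)
qed


lemma Abound: assumes p: "prime p" "odd p" and r: "r \<ge> 1"
  shows "card {x \<in> carrier (G (p ^ r)). gc (int p ^ r) (tg x ^ (p ^ s)) 1} \<le> p ^ s"
proof -
  define S where "S = {x \<in> carrier (G (p ^ r)). gc (int p ^ r) (tg x ^ (p ^ s)) 1}"
  have p3: "p \<ge> 3" using p prime_ge_2_nat[OF p(1)] by (metis le_antisym not_less_eq_eq numeral_2_eq_2 numeral_3_eq_3 dvd_refl)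
  have N1: "p ^ r \<ge> 1" using prime_gt_0_nat[OF p(1)] by simp
  have pd: "int p dvd int p ^ r" using r by (simp add: dvd_power)
  have z1: "gc (int p) (tg x) 1" if "x \<in> S" for x
  proof -
    have "[nrm (tg x) = 1] (mod int p ^ r)" using that carrier_G[OF N1] by (auto simp: S_def)
    then have "[nrm (tg x) = 1] (mod int p)" using pd cong_dvd_modulus by blast
    moreover have "gc (int p) (tg x ^ (p ^ s)) 1" using that pd gc_dvd by (auto simp: S_def)
    ultimately show ?thesis by (rule Fit[OF p])
  qed
  show ?thesis
  proof (cases "s \<ge> r")
    case True
    have "S \<subseteq> {x \<in> carrier (G (p ^ r)). gc (int p ^ 1) (tg x) 1}" using z1 by (auto simp: S_def)
    then have "card S \<le> card {x \<in> carrier (G (p ^ r)). gc (int p ^ 1) (tg x) 1}"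
      by (rule card_mono[rotated]) (rule finite_subset[OF _ fin_G], auto)
    also have "\<dots> \<le> p ^ (r - 1)" by (rule Ck[OF p]) (use r in auto)
    also have "\<dots> \<le> p ^ s" using True prime_gt_0_nat[OF p(1)] by (intro power_increasing) auto
    finally show ?thesis by (simp add: S_def)
  next
    case False
    define k where "k = r - s"
    have k: "k \<ge> 1" "k + s = r" using False by (auto simp: k_def)
    have "gc (int p ^ k) (tg x) 1" if "x \<in> S" for x
      using L2it[OF p(1) p3 z1[OF that] k(1), of s] that k(2) by (simp add: S_def)
    then have "S \<subseteq> {x \<in> carrier (G (p ^ r)). gc (int p ^ k) (tg x) 1}" by (auto simp: S_def)
    then have "card S \<le> card {x \<in> carrier (G (p ^ r)). gc (int p ^ k) (tg x) 1}"
      by (rule card_mono[rotated]) (rule finite_subset[OF _ fin_G], auto)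
    also have "\<dots> \<le> p ^ (r - k)" by (rule Ck[OF p]) (use k in auto)
    also have "r - k = s" using k by simp
    finally show ?thesis by (simp add: S_def)
  qed
qed


lemma Bbound: assumes p: "prime p" "odd p" and r: "r \<ge> 1" and m: "m > 0" "coprime m p"
  shows "card {x \<in> carrier (G (p ^ r)). gc (int p ^ r) (tg x ^ m) 1}
         \<le> card {y \<in> carrier (G p). gc (int p) (tg y ^ m) 1}"
proof -
  define S where "S = {x \<in> carrier (G (p ^ r)). gc (int p ^ r) (tg x ^ m) 1}"
  define T where "T = {y \<in> carrier (G p). gc (int p) (tg y ^ m) 1}"
  define g where "g x = fg (red (int p) (tg x))" for x
  have p3: "p \<ge> 3" using p prime_ge_2_nat[OF p(1)] by (metis le_antisym not_less_eq_eq numeral_2_eq_2 numeral_3_eq_3 dvd_refl)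
  have N1: "p ^ r \<ge> 1" using prime_gt_0_nat[OF p(1)] by simp
  have P1: "p \<ge> 1" using prime_gt_0_nat[OF p(1)] by simp
  have pd: "int p dvd int p ^ r" using r by (simp add: dvd_power)
  have Sx: "red (int p ^ r) (tg x) = tg x" "[nrm (tg x) = 1] (mod int p ^ r)" "gc (int p ^ r) (tg x ^ m) 1"
    if "x \<in> S" for x using that carrier_G[OF N1] by (auto simp: S_def)
  have into: "g ` S \<subseteq> T"
  proof
    fix y assume "y \<in> g ` S"
    then obtain x where x: "x \<in> S" "y = g x" by auto
    have ty: "tg y = red (int p) (tg x)" by (simp add: x(2) g_def)
    have "[nrm (tg y) = nrm (tg x)] (mod int p)" unfolding ty by (rule gc_nrm[OF gc_red])
    moreover have "[nrm (tg x) = 1] (mod int p)" using Sx(2)[OF x(1)] pd cong_dvd_modulus by blast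
    ultimately have n1: "[nrm (tg y) = 1] (mod int p)" by (rule cong_trans)
    have "gc (int p) (tg y ^ m) (tg x ^ m)" unfolding ty by (intro gc_pow gc_red)
    moreover have "gc (int p) (tg x ^ m) 1" using Sx(3)[OF x(1)] pd gc_dvd by blast
    ultimately have "gc (int p) (tg y ^ m) 1" by (rule gc_trans)
    moreover have "red (int p) (tg y) = tg y" by (simp add: ty)
    ultimately show "y \<in> T" using n1 carrier_G[OF P1] by (auto simp: T_def)
  qed
  have inj: "inj_on g S"
  proof (rule inj_onI)
    fix x x' assume x: "x \<in> S" and x': "x' \<in> S" and e: "g x = g x'"
    let ?z = "tg x" and ?z' = "tg x'"
    let ?N = "int p ^ r"
    have "red (int p) ?z = red (int p) ?z'" using e by (metis g_def tg_fg)
    then have zz: "gc (int p) ?z ?z'" by (simp add: red_eq_iff)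
    define w where "w = ?z * cnj ?z'"
    have nz': "gc ?N (of_int (nrm ?z')) 1" using Sx(2)[OF x'] gc_of_int[of ?N "nrm ?z'" 1] by simp
    have "gc (int p) w (?z' * cnj ?z')" unfolding w_def by (intro gc_mult zz gc_refl)
    then have "gc (int p) w (of_int (nrm ?z'))" by (simp add: mult_cnj)
    then have w1p: "gc (int p) w 1" using nz' pd gc_dvd gc_trans by blast
    have "w ^ m = ?z ^ m * cnj (?z' ^ m)" by (simp add: w_def power_mult_distrib cnj_pow)
    moreover have "gc ?N (?z ^ m * cnj (?z' ^ m)) (1 * cnj 1)"
      by (intro gc_mult gc_cnj Sx(3) x x')
    ultimately have wm: "gc ?N (w ^ m) 1" by simp
    have wp: "gc ?N (w ^ (p ^ (r - 1))) 1" using L1it[OF p(1) p3 w1p, of "r - 1"] r by simp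
    have "coprime m (p ^ (r - 1))" using m(2) by simp
    then obtain u v where uv: "m * u = p ^ (r - 1) * v + 1"
      using bezout_nat[of m "p ^ (r - 1)"] m(1) by auto
    have "gc ?N (w ^ (m * u)) 1" using gc_pow[OF wm, of u] by (simp add: power_mult)
    moreover have "gc ?N (w ^ (p ^ (r - 1) * v + 1)) (1 * w)"
    proof -
      have "w ^ (p ^ (r - 1) * v + 1) = (w ^ (p ^ (r - 1))) ^ v * w" by (simp only: power_mult power_add power_one_right)
      then show ?thesis using gc_mult[OF gc_pow[OF wp, of v] gc_refl[of ?N w]] by simp
    qed
    ultimately have w1: "gc ?N w 1" using uv by (metis gc_sym gc_trans mult_1)
    have "gc ?N (w * ?z') (1 * ?z')" by (intro gc_mult w1 gc_refl)
    moreover have "w * ?z' = ?z * of_int (nrm ?z')" by (simp add: w_def mult_cnj[symmetric] algebra_simps)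
    moreover have "gc ?N (?z * of_int (nrm ?z')) (?z * 1)" by (intro gc_mult gc_refl nz')
    ultimately have "gc ?N ?z ?z'" by (metis gc_sym gc_trans mult_1 mult_1_right)
    then have "red ?N ?z = red ?N ?z'" by (simp add: red_eq_iff)
    then have "?z = ?z'" using Sx(1)[OF x] Sx(1)[OF x'] by simp
    then show "x = x'" by (simp add: tg_inj)
  qed
  have "card S = card (g ` S)" using inj by (simp add: card_image)
  also have "\<dots> \<le> card T" by (rule card_mono[OF _ into]) (rule finite_subset[OF _ fin_G], auto simp: T_def)
  finally show ?thesis by (simp add: S_def T_def)
qed

lemma minus_one_QR:
  assumes p: "prime p" "odd p"
  shows "p mod 4 = 1 \<Longrightarrow> \<exists>s. [s ^ 2 = -1] (mod int p)"
    and "p mod 4 = 3 \<Longrightarrow> \<not> (\<exists>s. [s ^ 2 = -1] (mod int p))"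
proof -
  have p2: "2 < p" using p prime_ge_2_nat[OF p(1)] by (metis le_neq_implies_less dvd_refl)
  have E: "[Legendre (-1) (int p) = (-1) ^ ((p - 1) div 2)] (mod int p)"
    using euler_criterion[OF p(1) p2] by simp
  have n0: "\<not> [-1 = 0] (mod int p)" using p2 by (simp add: cong_iff_dvd_diff zdvd_not_zless)
  have n1: "\<not> [-1 = 1] (mod int p)"
  proof
    assume "[-1 = 1] (mod int p)"
    then have "int p dvd 2" by (simp add: cong_iff_dvd_diff)
    then have "int p \<le> 2" by (rule zdvd_imp_le) simp
    then show False using p2 by simp
  qed
  {
    assume "p mod 4 = 1"
    then have "even ((p - 1) div 2)" by presburger
    then have "[Legendre (-1) (int p) = 1] (mod int p)" using E by simp
    then have "Legendre (-1) (int p) = 1" using n0 n1 unfolding Legendre_def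
      by (auto split: if_splits simp: cong_sym)
    then have "QuadRes (int p) (-1)" unfolding Legendre_def by (auto split: if_splits)
    then show "\<exists>s. [s ^ 2 = -1] (mod int p)" by (simp add: QuadRes_def)
  }
  {
    assume "p mod 4 = 3"
    then have "odd ((p - 1) div 2)" by presburger
    then have L: "[Legendre (-1) (int p) = -1] (mod int p)" using E by simp
    show "\<not> (\<exists>s. [s ^ 2 = -1] (mod int p))"
    proof
      assume "\<exists>s. [s ^ 2 = -1] (mod int p)"
      then have "Legendre (-1) (int p) = 1" using n0 by (simp add: Legendre_def QuadRes_def)
      then show False using L n1 by (simp add: cong_sym)
    qed
  }
qed


lemma RL1:
  assumes p: "prime p" "odd p" "p mod 4 = 1" and m: "m > 0"
  shows "card {y \<in> carrier (G p). gc (int p) (tg y ^ m) 1} \<le> m"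
proof -
  define P where "P = int p"
  obtain s where s: "[s ^ 2 = -1] (mod P)" using minus_one_QR(1)[OF p] P_def by blast
  have sd: "P dvd s * s + 1" using s by (simp add: cong_iff_dvd_diff power2_eq_square P_def)
  have P1: "p \<ge> 1" using prime_gt_0_nat[OF p(1)] by simp
  have Pp: "prime P" using p by (simp add: P_def)
  have P2: "\<not> P dvd 2"
  proof
    assume "P dvd 2"
    then have "P \<le> 2" by (rule zdvd_imp_le) simp
    moreover have "p \<noteq> 2" using p(2) by auto
    moreover have "p \<ge> 2" using prime_ge_2_nat[OF p(1)] .
    ultimately show False unfolding P_def by linarith
  qed
  have Ps: "\<not> P dvd s"
  proof
    assume "P dvd s" then have "P dvd s * s" by simp
    then have "P dvd (s * s + 1) - s * s" using sd by (rule dvd_diff[rotated])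
    then have "P dvd 1" by simp
    then show False using Pp not_prime_unit by blast
  qed
  define phi where "phi z = re z + s * im z" for z
  have phi_mult: "P dvd phi (z * w) - phi z * phi w" for z w
  proof -
    have "phi (z * w) - phi z * phi w = (s * s + 1) * (- (im z * im w))"
      by (simp add: phi_def algebra_simps)
    then show ?thesis using sd by (metis dvd_mult2)
  qed
  have phi_pow: "[phi (z ^ k) = phi z ^ k] (mod P)" for z k
  proof (induction k)
    case 0 then show ?case by (simp add: phi_def)
  next
    case (Suc k)
    have "[phi (z ^ k * z) = phi (z ^ k) * phi z] (mod P)"
      using phi_mult[of "z ^ k" z] by (simp add: cong_iff_dvd_diff)
    also have "[phi (z ^ k) * phi z = phi z ^ k * phi z] (mod P)" using Suc by (rule cong_scalar_right)
    finally show ?case by (simp add: mult.commute)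
  qed
  define T where "T = {y \<in> carrier (G p). gc (int p) (tg y ^ m) 1}"
  define h where "h y = nat (phi (tg y) mod P)" for y
  have P0: "P > 0" using P1 by (simp add: P_def)
  have into: "h ` T \<subseteq> {x \<in> {..<p}. [x ^ m = 1] (mod p)}"
  proof
    fix u assume "u \<in> h ` T"
    then obtain y where y: "y \<in> T" "u = h y" by auto
    have "gc P (tg y ^ m) 1" using y by (simp add: T_def P_def)
    then have "P dvd re (tg y ^ m) - 1" "P dvd im (tg y ^ m)" by (simp_all add: gc_def of_int_dvd_gi)
    then have "P dvd (re (tg y ^ m) - 1) + s * im (tg y ^ m)" by simp
    then have "[phi (tg y ^ m) = 1] (mod P)" by (simp add: phi_def cong_iff_dvd_diff algebra_simps)
    then have c1: "[phi (tg y) ^ m = 1] (mod P)" using cong_trans[OF cong_sym[OF phi_pow]] by blast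
    have iu: "int u = phi (tg y) mod P" using y(2) P0 by (simp add: h_def)
    then have "[int u = phi (tg y)] (mod P)" by (simp add: cong_def)
    then have "[int u ^ m = phi (tg y) ^ m] (mod P)" by (rule cong_pow)
    then have "[int u ^ m = 1] (mod P)" using c1 by (rule cong_trans)
    then have "[int (u ^ m) = int 1] (mod int p)" by (simp add: P_def)
    then have "[u ^ m = 1] (mod p)" using cong_int_iff by blast
    moreover have "int u < int p" using iu P0 unfolding P_def by simp
    then have "u < p" by simp
    ultimately show "u \<in> {x \<in> {..<p}. [x ^ m = 1] (mod p)}" by simp
  qed
  have inj: "inj_on h T"
  proof (rule inj_onI)
    fix y y' assume y: "y \<in> T" and y': "y' \<in> T" and e: "h y = h y'"
    obtain a b where yab: "y = (a, b)" by (cases y)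
    obtain a' b' where yab': "y' = (a', b')" by (cases y')
    have cy: "y \<in> carrier (G p)" "y' \<in> carrier (G p)" using y y' by (auto simp: T_def)
    have rng: "0 \<le> a" "a < P" "0 \<le> b" "b < P" "0 \<le> a'" "a' < P" "0 \<le> b'" "b' < P"
      using cy yab yab' by (auto simp: mem_G P_def)
    have n: "P dvd a * a + b * b - 1" "P dvd a' * a' + b' * b' - 1"
      using cy yab yab' by (auto simp: mem_G P_def cong_iff_dvd_diff power2_eq_square)
    define u where "u = a + s * b"
    define v where "v = a - s * b"
    define u' where "u' = a' + s * b'"
    define v' where "v' = a' - s * b'"
    have "int (h y) = phi (tg y) mod P" "int (h y') = phi (tg y') mod P" using P0 by (simp_all add: h_def)
    then have "phi (tg y) mod P = phi (tg y') mod P" using e by simp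
    then have uu: "P dvd u' - u" using yab yab' by (simp add: phi_def u_def u'_def mod_eq_dvd_iff dvd_diff_commute)
    have uv: "P dvd u * v - 1"
    proof -
      have eq: "u * v - 1 = (a * a + b * b - 1) - (s * s + 1) * (b * b)" by (simp add: u_def v_def algebra_simps)
      have "P dvd (a * a + b * b - 1) - (s * s + 1) * (b * b)" by (rule dvd_diff[OF n(1) dvd_mult2[OF sd]])
      then show ?thesis by (simp only: eq)
    qed
    have uv': "P dvd 1 - u' * v'"
    proof -
      have eq: "u' * v' - 1 = (a' * a' + b' * b' - 1) - (s * s + 1) * (b' * b')" by (simp add: u'_def v'_def algebra_simps)
      have "P dvd (a' * a' + b' * b' - 1) - (s * s + 1) * (b' * b')" by (rule dvd_diff[OF n(2) dvd_mult2[OF sd]])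
      then have "P dvd u' * v' - 1" by (simp only: eq)
      then show ?thesis by (simp add: dvd_diff_commute)
    qed
    have "v - v' = v * (1 - u' * v') + v' * (v * (u' - u) + (u * v - 1))" by (simp add: algebra_simps)
    then have vv: "P dvd v - v'" using uu uv uv' by simp
    have "2 * (a - a') = (u - u') + (v - v')" by (simp add: u_def u'_def v_def v'_def algebra_simps)
    moreover have "P dvd (u - u') + (v - v')" using uu vv by (simp add: dvd_diff_commute)
    ultimately have "P dvd 2 * (a - a')" by simp
    then have aa: "P dvd a - a'" using prime_dvd_mult_iff[OF Pp, of 2 "a - a'"] P2 by blast
    have "2 * s * (b - b') = (u - u') - (v - v')" by (simp add: u_def u'_def v_def v'_def algebra_simps)
    moreover have "P dvd (u - u') - (v - v')" using uu vv by (simp add: dvd_diff_commute)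
    ultimately have "P dvd 2 * s * (b - b')" by simp
    then have bb: "P dvd b - b'" using prime_dvd_mult_iff[OF Pp, of "2 * s" "b - b'"] prime_dvd_mult_iff[OF Pp, of 2 s] P2 Ps by blast
    have "a = a'"
    proof (rule ccontr)
      assume "a \<noteq> a'" then have "\<bar>P\<bar> \<le> \<bar>a - a'\<bar>" using aa dvd_imp_le_int by simp
      then show False using rng by simp
    qed
    moreover have "b = b'"
    proof (rule ccontr)
      assume "b \<noteq> b'" then have "\<bar>P\<bar> \<le> \<bar>b - b'\<bar>" using bb dvd_imp_le_int by simp
      then show False using rng by simp
    qed
    ultimately show "y = y'" using yab yab' by simp
  qed
  have "card T = card (h ` T)" using inj by (simp add: card_image)
  also have "\<dots> \<le> card {x \<in> {..<p}. [x ^ m = 1] (mod p)}" by (rule card_mono[OF _ into]) simp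
  also have "\<dots> \<le> m" by (rule roots_mod_prime_bound[OF p(1) m])
  finally show ?thesis by (simp add: T_def)
qed

definition Dp :: "nat \<Rightarrow> gi ring" where
  "Dp p = \<lparr>carrier = {z. red (int p) z = z}, mult = (\<lambda>x y. red (int p) (x * y)), one = 1,
           zero = 0, add = (\<lambda>x y. red (int p) (x + y))\<rparr>"

lemma Dp_simps: "carrier (Dp p) = {z. red (int p) z = z}" "mult (Dp p) = (\<lambda>x y. red (int p) (x * y))"
  "one (Dp p) = 1" "zero (Dp p) = 0" "add (Dp p) = (\<lambda>x y. red (int p) (x + y))"
  by (simp_all add: Dp_def)

lemma red_add_cong: "red n (red n a + b) = red n (a + b)" "red n (a + red n b) = red n (a + b)"
  by (simp_all add: red_eq_iff gc_add gc_red)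

lemma red_one: "n \<ge> 2 \<Longrightarrow> red (int n) 1 = 1" by (simp add: gi_eq_iff)
lemma red_zero[simp]: "red n 0 = 0" by (simp add: gi_eq_iff)

lemma Dp_pow: "p \<ge> 2 \<Longrightarrow> x [^]\<^bsub>Dp p\<^esub> (k::nat) = red (int p) (x ^ k)"
proof (induction k)
  case 0 then show ?case by (simp add: Dp_simps red_one)
next
  case (Suc k)
  then show ?case by (simp add: Dp_simps red_mult_cong mult.commute)
qed

lemma nrm_dvd_3: assumes p: "prime p" "p mod 4 = 3" and d: "int p dvd nrm z"
  shows "int p dvd re z \<and> int p dvd im z"
proof -
  define P where "P = int p"
  have odd: "odd p" using p(2) by presburger
  have Pp: "prime P" using p by (simp add: P_def)
  have dy: "P dvd im z"
  proof (rule ccontr)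
    assume "\<not> P dvd im z"
    then have "coprime (im z) P" using Pp by (simp add: prime_imp_coprime coprime_commute)
    then obtain c where c: "[im z * c = 1] (mod P)" using cong_solve_coprime_int by blast
    have "P dvd (re z ^ 2 + im z ^ 2) * c ^ 2" using d by (simp add: P_def nrm_def)
    moreover have "(re z ^ 2 + im z ^ 2) * c ^ 2 = (re z * c) ^ 2 + (im z * c) ^ 2" by (simp add: algebra_simps power2_eq_square)
    ultimately have "[(re z * c) ^ 2 + (im z * c) ^ 2 = 0] (mod P)" by (simp add: cong_0_iff)
    moreover have "[(im z * c) ^ 2 = 1 ^ 2] (mod P)" using c by (rule cong_pow)
    ultimately have "[(re z * c) ^ 2 + 1 = 0] (mod P)" by (metis cong_add_lcancel cong_sym cong_trans power_one)
    then have "[(re z * c) ^ 2 = -1] (mod P)" by (simp add: cong_iff_dvd_diff)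
    then show False using minus_one_QR(2)[OF p(1) odd p(2)] by (auto simp: P_def)
  qed
  have "P dvd re z ^ 2 + im z ^ 2" using d by (simp add: P_def nrm_def)
  moreover have "P dvd im z ^ 2" using dy by (simp add: power2_eq_square)
  ultimately have "P dvd re z ^ 2" by (metis dvd_add_left_iff)
  then have "P dvd re z" using Pp prime_dvd_power by blast
  then show ?thesis using dy by (simp add: P_def)
qed


lemma Dp_domain: assumes p: "prime p" "p mod 4 = 3" shows "domain (Dp p)"
proof -
  have p2: "p \<ge> 2" using prime_ge_2_nat[OF p(1)] .
  have cr: "cring (Dp p)"
  proof (rule cringI)
    show "abelian_group (Dp p)"
    proof (rule abelian_groupI)
      fix x y z
      show "x \<oplus>\<^bsub>Dp p\<^esub> y \<in> carrier (Dp p)" by (simp add: Dp_simps)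
      show "\<zero>\<^bsub>Dp p\<^esub> \<in> carrier (Dp p)" by (simp add: Dp_simps)
      show "x \<oplus>\<^bsub>Dp p\<^esub> y \<oplus>\<^bsub>Dp p\<^esub> z = x \<oplus>\<^bsub>Dp p\<^esub> (y \<oplus>\<^bsub>Dp p\<^esub> z)"
        by (simp add: Dp_simps red_add_cong add.assoc)
      show "x \<oplus>\<^bsub>Dp p\<^esub> y = y \<oplus>\<^bsub>Dp p\<^esub> x" by (simp add: Dp_simps add.commute)
      show "x \<in> carrier (Dp p) \<Longrightarrow> \<zero>\<^bsub>Dp p\<^esub> \<oplus>\<^bsub>Dp p\<^esub> x = x" by (simp add: Dp_simps)
      show "x \<in> carrier (Dp p) \<Longrightarrow> \<exists>y\<in>carrier (Dp p). y \<oplus>\<^bsub>Dp p\<^esub> x = \<zero>\<^bsub>Dp p\<^esub>"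
        by (rule bexI[of _ "red (int p) (- x)"]) (simp_all add: Dp_simps red_add_cong)
    qed
    show "comm_monoid (Dp p)"
    proof (rule comm_monoidI)
      fix x y z
      show "x \<otimes>\<^bsub>Dp p\<^esub> y \<in> carrier (Dp p)" by (simp add: Dp_simps)
      show "\<one>\<^bsub>Dp p\<^esub> \<in> carrier (Dp p)" using p2 by (simp add: Dp_simps red_one)
      show "x \<otimes>\<^bsub>Dp p\<^esub> y \<otimes>\<^bsub>Dp p\<^esub> z = x \<otimes>\<^bsub>Dp p\<^esub> (y \<otimes>\<^bsub>Dp p\<^esub> z)"
        by (simp add: Dp_simps red_mult_cong mult.assoc)
      show "x \<in> carrier (Dp p) \<Longrightarrow> \<one>\<^bsub>Dp p\<^esub> \<otimes>\<^bsub>Dp p\<^esub> x = x" by (simp add: Dp_simps)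
      show "x \<otimes>\<^bsub>Dp p\<^esub> y = y \<otimes>\<^bsub>Dp p\<^esub> x" by (simp add: Dp_simps mult.commute)
    qed
    fix x y z
    show "(x \<oplus>\<^bsub>Dp p\<^esub> y) \<otimes>\<^bsub>Dp p\<^esub> z = x \<otimes>\<^bsub>Dp p\<^esub> z \<oplus>\<^bsub>Dp p\<^esub> y \<otimes>\<^bsub>Dp p\<^esub> z"
      by (simp add: Dp_simps red_mult_cong red_add_cong algebra_simps)
  qed
  show ?thesis
  proof (rule domain.intro[OF cr], rule domain_axioms.intro)
    show "\<one>\<^bsub>Dp p\<^esub> \<noteq> \<zero>\<^bsub>Dp p\<^esub>" by (simp add: Dp_simps gi_eq_iff)
  next
    fix a b assume ab: "a \<otimes>\<^bsub>Dp p\<^esub> b = \<zero>\<^bsub>Dp p\<^esub>" "a \<in> carrier (Dp p)" "b \<in> carrier (Dp p)"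
    have "red (int p) (a * b) = red (int p) 0" using ab(1) by (simp add: Dp_simps)
    then have "gc (int p) (a * b) 0" by (simp only: red_eq_iff)
    then have "[nrm (a * b) = nrm 0] (mod int p)" by (rule gc_nrm)
    moreover have "nrm (0::gi) = 0" by (simp add: nrm_def)
    ultimately have "int p dvd nrm (a * b)" by (simp add: cong_0_iff)
    then have "int p dvd nrm a * nrm b" by (simp only: nrm_mult)
    then have "int p dvd nrm a \<or> int p dvd nrm b" using p(1) by (simp add: prime_dvd_mult_iff)
    moreover have "c = 0" if "int p dvd nrm c" "c \<in> carrier (Dp p)" for c
    proof -
      have "int p dvd re c" "int p dvd im c" using nrm_dvd_3[OF p that(1)] by auto
      then have "red (int p) c = 0" by (simp add: gi_eq_iff)
      then show ?thesis using that(2) by (simp add: Dp_simps)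
    qed
    ultimately show "a = \<zero>\<^bsub>Dp p\<^esub> \<or> b = \<zero>\<^bsub>Dp p\<^esub>" using ab by (auto simp: Dp_simps)
  qed
qed

lemma RL3:
  assumes p: "prime p" "p mod 4 = 3" and m: "m > 0"
  shows "card {y \<in> carrier (G p). gc (int p) (tg y ^ m) 1} \<le> m"
proof -
  interpret D: domain "Dp p" by (rule Dp_domain[OF p])
  have p2: "p \<ge> 2" using prime_ge_2_nat[OF p(1)] .
  have P1: "p \<ge> 1" using p2 by simp
  have fin: "finite (carrier (Dp p))"
  proof -
    have "carrier (Dp p) \<subseteq> tg ` ({0..<int p} \<times> {0..<int p})"
    proof
      fix z assume "z \<in> carrier (Dp p)"
      then have "red (int p) z = z" by (simp add: Dp_simps)
      then have e: "re z mod int p = re z" "im z mod int p = im z"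
        by (metis red_simps(1), metis red_simps(2))
      have P0: "int p > 0" using p2 by simp
      have "re z mod int p \<in> {0..<int p}" "im z mod int p \<in> {0..<int p}" using P0 by simp_all
      then have "re z \<in> {0..<int p}" "im z \<in> {0..<int p}" using e by simp_all
      then show "z \<in> tg ` ({0..<int p} \<times> {0..<int p})" by (intro image_eqI[of _ _ "fg z"]) (auto simp: fg_def gi_eq_iff)
    qed
    then show ?thesis by (rule finite_subset) simp
  qed
  define T where "T = {y \<in> carrier (G p). gc (int p) (tg y ^ m) 1}"
  have into: "tg ` T \<subseteq> {x \<in> carrier (Dp p). x [^]\<^bsub>Dp p\<^esub> m = \<one>\<^bsub>Dp p\<^esub>}"
  proof
    fix z assume "z \<in> tg ` T"
    then obtain y where y: "y \<in> T" "z = tg y" by auto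
    have "red (int p) z = z" using y carrier_G[OF P1] by (auto simp: T_def)
    moreover have "red (int p) (z ^ m) = red (int p) 1" using y by (simp add: T_def red_eq_iff)
    ultimately show "z \<in> {x \<in> carrier (Dp p). x [^]\<^bsub>Dp p\<^esub> m = \<one>\<^bsub>Dp p\<^esub>}"
      using p2 by (simp add: Dp_simps Dp_pow red_one)
  qed
  have "card T = card (tg ` T)" by (simp add: card_image inj_on_def tg_inj)
  also have "\<dots> \<le> card {x \<in> carrier (Dp p). x [^]\<^bsub>Dp p\<^esub> m = \<one>\<^bsub>Dp p\<^esub>}"
    by (rule card_mono[OF _ into]) (use fin in simp)
  also have "\<dots> \<le> m" using D.num_roots_le_deg[OF fin] m by simp
  finally show ?thesis by (simp add: T_def)
qed

lemma RL: assumes p: "prime p" "odd p" and m: "m > 0"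
  shows "card {y \<in> carrier (G p). gc (int p) (tg y ^ m) 1} \<le> m"
proof -
  have "p mod 4 = 1 \<or> p mod 4 = 3" using p(2) by presburger
  then show ?thesis using RL1[OF p _ m] RL3[OF p(1) _ m] by blast
qed

lemma (in group) powmod: assumes "x \<in> carrier G" "x [^] (d::nat) = \<one>" "[a = b] (mod d)"
  shows "x [^] a = x [^] b"
proof -
  have "x [^] c = x [^] (c mod d)" for c :: nat
  proof -
    have "x [^] c = x [^] (d * (c div d) + c mod d)" by simp
    also have "\<dots> = x [^] (d * (c div d)) \<otimes> x [^] (c mod d)" by (rule nat_pow_mult[symmetric, OF assms(1)])
    also have "x [^] (d * (c div d)) = (x [^] d) [^] (c div d)" by (rule nat_pow_pow[symmetric, OF assms(1)])
    finally show ?thesis using assms by simp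
  qed
  then show ?thesis using assms(3) by (metis cong_def)
qed

lemma MC: assumes p: "prime p" "odd p" and r: "r \<ge> 1" and d: "d > 0"
  shows "card {x \<in> carrier (G (p ^ r)). x [^]\<^bsub>G (p ^ r)\<^esub> d = \<one>\<^bsub>G (p ^ r)\<^esub>} \<le> d"
proof -
  have p2: "p \<ge> 2" using prime_ge_2_nat[OF p(1)] .
  have "p ^ 1 \<le> p ^ r" using r p2 by (intro power_increasing) auto
  then have n2: "p ^ r \<ge> 2" using p2 by simp
  interpret comm_group "G (p ^ r)" using G_comm_group[OF n2] .
  define s where "s = multiplicity p d"
  define m where "m = d div p ^ s"
  have dsm: "d = p ^ s * m" using multiplicity_dvd[of p d] by (simp add: s_def m_def)
  have "\<not> p dvd m" unfolding m_def s_def by (rule multiplicity_decompose) (use d p(1) not_prime_unit in auto)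
  then have cmp: "coprime m p" using prime_imp_coprime[OF p(1)] by (simp add: coprime_commute)
  have m0: "m > 0"
  proof (rule ccontr)
    assume "\<not> m > 0" then have "m = 0" by simp
    then show False using d dsm by simp
  qed
  have c1: "coprime m (p ^ s)" using cmp by simp
  obtain M where M: "[m * M = 1] (mod p ^ s)" using cong_solve_coprime_nat[OF c1] by auto
  obtain K where K: "[p ^ s * K = 1] (mod m)" using cong_solve_coprime_nat[of "p ^ s" m] c1
    by (auto simp: coprime_commute)
  define e where "e = m * M + p ^ s * K"
  have "[p ^ s * K = 0] (mod p ^ s)" by (simp add: cong_0_iff)
  then have h1: "[e = 1 + 0] (mod p ^ s)" unfolding e_def using M cong_add by blast
  have "[m * M = 0] (mod m)" by (simp add: cong_0_iff)
  then have h2: "[e = 0 + 1] (mod m)" unfolding e_def using K cong_add by blast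
  have c2: "coprime (p ^ s) m" using c1 by (simp add: coprime_commute)
  have "[e = 1] (mod p ^ s * m)" using coprime_cong_mult_nat[OF _ _ c2] h1 h2 by simp
  then have e1: "[e = 1] (mod d)" using dsm by simp
  define S where "S = {x \<in> carrier (G (p ^ r)). x [^]\<^bsub>G (p ^ r)\<^esub> d = \<one>\<^bsub>G (p ^ r)\<^esub>}"
  define A where "A = {x \<in> carrier (G (p ^ r)). x [^]\<^bsub>G (p ^ r)\<^esub> (p ^ s) = \<one>\<^bsub>G (p ^ r)\<^esub>}"
  define B where "B = {x \<in> carrier (G (p ^ r)). x [^]\<^bsub>G (p ^ r)\<^esub> m = \<one>\<^bsub>G (p ^ r)\<^esub>}"
  define f where "f x = (x [^]\<^bsub>G (p ^ r)\<^esub> (m * M), x [^]\<^bsub>G (p ^ r)\<^esub> (p ^ s * K))" for x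
  have into: "f ` S \<subseteq> A \<times> B"
  proof
    fix y assume "y \<in> f ` S"
    then obtain x where x: "x \<in> S" "y = f x" by auto
    have xc: "x \<in> carrier (G (p ^ r))" "x [^]\<^bsub>G (p ^ r)\<^esub> d = \<one>\<^bsub>G (p ^ r)\<^esub>" using x by (auto simp: S_def)
    have "(x [^]\<^bsub>G (p ^ r)\<^esub> (m * M)) [^]\<^bsub>G (p ^ r)\<^esub> (p ^ s) = x [^]\<^bsub>G (p ^ r)\<^esub> (m * M * p ^ s)"
      using xc by (simp add: nat_pow_pow)
    also have "\<dots> = x [^]\<^bsub>G (p ^ r)\<^esub> (0::nat)"
      by (rule powmod[OF xc]) (simp add: cong_0_iff dsm)
    finally have a: "(x [^]\<^bsub>G (p ^ r)\<^esub> (m * M)) [^]\<^bsub>G (p ^ r)\<^esub> (p ^ s) = \<one>\<^bsub>G (p ^ r)\<^esub>" by simp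
    have "(x [^]\<^bsub>G (p ^ r)\<^esub> (p ^ s * K)) [^]\<^bsub>G (p ^ r)\<^esub> m = x [^]\<^bsub>G (p ^ r)\<^esub> (p ^ s * K * m)"
      using xc by (simp add: nat_pow_pow)
    also have "\<dots> = x [^]\<^bsub>G (p ^ r)\<^esub> (0::nat)"
      by (rule powmod[OF xc]) (simp add: cong_0_iff dsm)
    finally have b: "(x [^]\<^bsub>G (p ^ r)\<^esub> (p ^ s * K)) [^]\<^bsub>G (p ^ r)\<^esub> m = \<one>\<^bsub>G (p ^ r)\<^esub>" by simp
    show "y \<in> A \<times> B" using a b xc x(2) by (simp add: f_def A_def B_def)
  qed
  have inj: "inj_on f S"
  proof (rule inj_onI)
    fix x y assume x: "x \<in> S" and y: "y \<in> S" and fe: "f x = f y"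
    have rec: "z [^]\<^bsub>G (p ^ r)\<^esub> (m * M) \<otimes>\<^bsub>G (p ^ r)\<^esub> z [^]\<^bsub>G (p ^ r)\<^esub> (p ^ s * K) = z" if "z \<in> S" for z
    proof -
      have zc: "z \<in> carrier (G (p ^ r))" "z [^]\<^bsub>G (p ^ r)\<^esub> d = \<one>\<^bsub>G (p ^ r)\<^esub>" using that by (auto simp: S_def)
      have "z [^]\<^bsub>G (p ^ r)\<^esub> (m * M) \<otimes>\<^bsub>G (p ^ r)\<^esub> z [^]\<^bsub>G (p ^ r)\<^esub> (p ^ s * K) = z [^]\<^bsub>G (p ^ r)\<^esub> e"
        using zc by (simp add: nat_pow_mult e_def)
      also have "\<dots> = z [^]\<^bsub>G (p ^ r)\<^esub> (1::nat)" by (rule powmod[OF zc e1])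
      finally show ?thesis using zc by simp
    qed
    have "x = fst (f x) \<otimes>\<^bsub>G (p ^ r)\<^esub> snd (f x)" using rec[OF x] by (simp add: f_def)
    also have "\<dots> = fst (f y) \<otimes>\<^bsub>G (p ^ r)\<^esub> snd (f y)" using fe by simp
    also have "\<dots> = y" using rec[OF y] by (simp add: f_def)
    finally show "x = y" .
  qed
  have fin: "finite A" "finite B" using fin_G by (auto simp: A_def B_def)
  have "card S = card (f ` S)" using inj by (simp add: card_image)
  also have "\<dots> \<le> card (A \<times> B)" by (rule card_mono[OF _ into]) (use fin in simp)
  also have "\<dots> = card A * card B" by (simp add: card_cartesian_product)
  also have "card A \<le> p ^ s"
  proof -
    have "A = {x \<in> carrier (G (p ^ r)). gc (int p ^ r) (tg x ^ (p ^ s)) 1}"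
      by (simp add: A_def G_pow_one_iff)
    then show ?thesis using Abound[OF p r] by simp
  qed
  also have "card B \<le> m"
  proof -
    have "B = {x \<in> carrier (G (p ^ r)). gc (int p ^ r) (tg x ^ m) 1}"
      by (simp add: B_def G_pow_one_iff)
    then have "card B \<le> card {y \<in> carrier (G p). gc (int p) (tg y ^ m) 1}"
      using Bbound[OF p r m0 cmp] by simp
    also have "\<dots> \<le> m" by (rule RL[OF p m0])
    finally show ?thesis .
  qed
  finally show ?thesis using dsm by (simp add: S_def mult_le_mono)
qed

lemma back_pr: assumes p: "prime p" "odd p" and r: "r > 0"
  shows "Phi (p ^ r) = Lambda (p ^ r)"
proof -
  have p2: "p \<ge> 2" using prime_ge_2_nat[OF p(1)] .
  have "p ^ 1 \<le> p ^ r" using r p2 by (intro power_increasing) auto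
  then have n2: "p ^ r \<ge> 2" using p2 by simp
  note L = Lambda_props[OF n2]
  have "carrier (G (p ^ r)) \<subseteq> {x \<in> carrier (G (p ^ r)). x [^]\<^bsub>G (p ^ r)\<^esub> Lambda (p ^ r) = \<one>\<^bsub>G (p ^ r)\<^esub>}"
    using L(3) by auto
  then have "Phi (p ^ r) \<le> card {x \<in> carrier (G (p ^ r)). x [^]\<^bsub>G (p ^ r)\<^esub> Lambda (p ^ r) = \<one>\<^bsub>G (p ^ r)\<^esub>}"
    unfolding Phi_def by (rule card_mono[rotated]) (rule finite_subset[OF _ fin_G], auto)
  also have "\<dots> \<le> Lambda (p ^ r)" using MC[OF p _ L(1)] r by simp
  finally show ?thesis using L(2) by simp
qed

lemma back_2: "Phi 2 = Lambda 2"
proof -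
  have c: "carrier (G 2) = {(1, 0), (0, 1)}"
  proof
    show "carrier (G 2) \<subseteq> {(1, 0), (0, 1)}"
    proof
      fix x assume "x \<in> carrier (G 2)"
      then have x: "0 \<le> fst x" "fst x < 2" "0 \<le> snd x" "snd x < 2" "[fst x ^ 2 + snd x ^ 2 = 1] (mod 2)"
        by (auto simp: mem_G)
      then have "fst x = 0 \<or> fst x = 1" "snd x = 0 \<or> snd x = 1" by auto
      then show "x \<in> {(1, 0), (0, 1)}" using x(5) by (cases x) (auto simp: cong_def)
    qed
    show "{(1, 0), (0, 1)} \<subseteq> carrier (G 2)" by (auto simp: mem_G cong_def)
  qed
  then have P: "Phi 2 = 2" by (simp add: Phi_def)
  note L = Lambda_props[of 2, simplified]
  have "Lambda 2 \<noteq> 1"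
  proof
    assume "Lambda 2 = 1"
    then have "(0, 1) [^]\<^bsub>G 2\<^esub> (1::nat) = \<one>\<^bsub>G 2\<^esub>" using L(3) c by auto
    then show False unfolding G_pow G_one by (simp add: fg_def tg_def)
  qed
  then show ?thesis using L(1,2) P by simp
qed

theorem mainTheorem7:
  fixes n :: nat
  assumes "n \<ge> 2"
  shows "Phi n = Lambda n \<longleftrightarrow> (n = 2 \<or> (\<exists>p r. prime p \<and> odd p \<and> r > 0 \<and> n = p ^ r))"
proof
  assume "Phi n = Lambda n"
  then show "n = 2 \<or> (\<exists>p r. prime p \<and> odd p \<and> r > 0 \<and> n = p ^ r)"
    using forward[OF assms] by fastforce
next
  assume "n = 2 \<or> (\<exists>p r. prime p \<and> odd p \<and> r > 0 \<and> n = p ^ r)"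
  then show "Phi n = Lambda n" using back_2 back_pr by auto
qed

end
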